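(* Let $n\ge3$, $a_0\in\mathbb{R}$, $a\in\mathbb{R}^n$ with $a_0+a^\top x>0$ for all $x\in\{0,1\}^n$. Let $I=\{i,j\}\subseteq[n]$ with $i\ne j$. Then $\operatorname{conv}(\mathcal{G}_I)$ equals the set of all $(\rho,y,x_i,x_j)\in\mathbb{R}\times\mathbb{R}^n\times\mathbb{R}\times\mathbb{R}$ for which there exists $w=(w_{uv})_{\{u,v\}\in E(I)}$ such that: (a) for every $\{u,v\}\in E(I)$: $w_{uv}\ge0$, $y_u+y_v-w_{uv}\le\rho$, $w_{uv}\le y_u$, $w_{uv}\le y_v$; (b) for every $k\in[n]\setminus\{i,j\}$: $y_i+y_j+y_k-w_{ij}-w_{jk}-w_{ik}\le\rho$, $-y_i+w_{ij}+w_{ik}-w_{jk}\le0$, $-y_j+w_{ij}-w_{ik}+w_{jk}\le0$, $-y_k-w_{ij}+w_{ik}+w_{jk}\le0$; (c) $\rho\ge0$ and $a_0\rho+a^\top y=1$; (d) $x_u=(a_0+a_u)y_u+\sum_{v\in[n]\setminus\{u\}}a_vw_{uv}$ for $u\in\{i,j\}$. Consequently the 2-term relaxation of the linear fractional polytope is the intersection over all such $I$ of these sets (each extended to the space of $(\rho,y,x)$).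
   Context: For $I\subseteq[n]$, $\mathcal{G}_I=\bigl\{\bigl(\frac{1}{a_0+a^\top x},\frac{x}{a_0+a^\top x},(x_i)_{i\in I}\bigr)\bigm| x\in\{0,1\}^n\bigr\}$. The linear fractional polytope is $\operatorname{conv}(\mathcal{G}_{[n]})$, and its $k$-term relaxation is $\bigcap_{I\subseteq[n],|I|=k}\operatorname{conv}(\mathcal{G}_I)$, where each $\operatorname{conv}(\mathcal{G}_I)$ is extended to the space of $(\rho,y,x)\in\mathbb{R}\times\mathbb{R}^n\times\mathbb{R}^n$ by leaving the coordinates $x_l$, $l\notin I$, free. $E(I)$ is the set of unordered pairs $\{u,v\}$ of distinct elements of $[n]$ with $u\in I$ or $v\in I$; $w_{uv}=w_{vu}$ denotes the variable of the pair $\{u,v\}$. *)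

theory Defs
  imports "HOL-Analysis.Analysis"
begin

text \<open>Index set [n] is the finite type 'n (n = CARD('n)); vectors in R^n are real^'n.\<close>

definition binary_points :: "(real^'n) set" where
  "binary_points = {x. \<forall>k. x $ k \<in> {0, 1}}"

definition G2 :: "real \<Rightarrow> real^'n \<Rightarrow> 'n \<Rightarrow> 'n \<Rightarrow> (real \<times> (real^'n) \<times> real \<times> real) set" where
  "G2 a0 a i j = (\<lambda>x. (1 / (a0 + a \<bullet> x), (1 / (a0 + a \<bullet> x)) *\<^sub>R x, x $ i, x $ j)) ` binary_points"

definition E :: "'n set \<Rightarrow> 'n set set" where
  "E I = {{u, v} | u v. u \<noteq> v \<and> (u \<in> I \<or> v \<in> I)}"

text \<open>The set described in the corollary; w_{uv} is w {u,v} (so w_{uv} = w_{vu}).\<close>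
definition S2 :: "real \<Rightarrow> real^'n \<Rightarrow> 'n \<Rightarrow> 'n \<Rightarrow> (real \<times> (real^'n) \<times> real \<times> real) set" where
  "S2 a0 a i j = {(\<rho>, y, xi, xj). \<exists>w :: 'n set \<Rightarrow> real.
     (\<forall>u v. {u, v} \<in> E {i, j} \<longrightarrow>
        w {u, v} \<ge> 0 \<and> y $ u + y $ v - w {u, v} \<le> \<rho> \<and>
        w {u, v} \<le> y $ u \<and> w {u, v} \<le> y $ v) \<and>
     (\<forall>k. k \<notin> {i, j} \<longrightarrow>
        y $ i + y $ j + y $ k - w {i, j} - w {j, k} - w {i, k} \<le> \<rho> \<and>
        - y $ i + w {i, j} + w {i, k} - w {j, k} \<le> 0 \<and>
        - y $ j + w {i, j} - w {i, k} + w {j, k} \<le> 0 \<and>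
        - y $ k - w {i, j} + w {i, k} + w {j, k} \<le> 0) \<and>
     \<rho> \<ge> 0 \<and> a0 * \<rho> + a \<bullet> y = 1 \<and>
     xi = (a0 + a $ i) * y $ i + (\<Sum>v\<in>UNIV - {i}. a $ v * w {i, v}) \<and>
     xj = (a0 + a $ j) * y $ j + (\<Sum>v\<in>UNIV - {j}. a $ v * w {j, v})}"

definition extend2 :: "'n \<Rightarrow> 'n \<Rightarrow> (real \<times> (real^'n) \<times> real \<times> real) set \<Rightarrow> (real \<times> (real^'n) \<times> (real^'n)) set" where
  "extend2 i j S = {(\<rho>, y, x). (\<rho>, y, x $ i, x $ j) \<in> S}"

definition two_term_relaxation :: "real \<Rightarrow> real^'n \<Rightarrow> (real \<times> (real^'n) \<times> (real^'n)) set" where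
  "two_term_relaxation a0 a = \<Inter> {extend2 i j (convex hull (G2 a0 a i j)) | i j. i \<noteq> j}"

end

theory Submission imports Defs "HOL-Analysis.Cartesian_Euclidean_Space" begin

lemma inner_cart: "(a::real^'n) \<bullet> x = (\<Sum>k\<in>UNIV. a$k * x$k)"
  by (simp add: inner_vec_def)

lemma finite_binary: "finite (binary_points :: (real^'n::finite) set)"
proof -
  have "binary_points \<subseteq> (\<lambda>S. \<chi> k. if k \<in> S then 1 else (0::real)) ` (UNIV :: 'n set set)"
  proof
    fix x :: "real^'n" assume "x \<in> binary_points"
    then have "x = (\<chi> k. if k \<in> {k. x$k = 1} then 1 else 0)"
      by (auto simp: binary_points_def vec_eq_iff)
    then show "x \<in> range (\<lambda>S. \<chi> k. if k \<in> S then 1 else (0::real))" by blast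
  qed
  then show ?thesis by (rule finite_subset) simp
qed

lemma uic_cart:
  "cbox (0::real^'n) 1 = convex hull {x. \<forall>i. (x$i = 0) \<or> (x$i = 1)}"
  unfolding Cart_1 unit_interval_convex_hull[where 'a="real^'n"] box_real[symmetric]
  by (rule arg_cong[where f="\<lambda>x. convex hull x"]) (simp add: Basis_vec_def inner_axis)

lemma binary_hull: "cbox (0::real^'n) 1 = convex hull binary_points"
  unfolding uic_cart binary_points_def by simp

lemma cmb: "(p::real) \<le> q \<Longrightarrow> r \<le> s \<Longrightarrow> 0 \<le> u \<Longrightarrow> 0 \<le> v \<Longrightarrow> u * p + v * r \<le> u * q + v * s"
  by (metis add_mono mult_left_mono)

lemma S2_convex: "convex (S2 a0 (a::real^'n) i j)"
proof (rule convexI)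
  fix p1 p2 :: "real \<times> (real^'n) \<times> real \<times> real" and u v :: real
  assume p1: "p1 \<in> S2 a0 a i j" and p2: "p2 \<in> S2 a0 a i j" and u: "0 \<le> u" and v: "0 \<le> v" and uv: "u + v = 1"
  obtain r1 y1 a1 b1 where e1: "p1 = (r1,y1,a1,b1)" by (cases p1) auto
  obtain r2 y2 a2 b2 where e2: "p2 = (r2,y2,a2,b2)" by (cases p2) auto
  from p1 obtain w1 where
    A1: "\<forall>u v. {u, v} \<in> E {i, j} \<longrightarrow>
        w1 {u, v} \<ge> 0 \<and> y1 $ u + y1 $ v - w1 {u, v} \<le> r1 \<and>
        w1 {u, v} \<le> y1 $ u \<and> w1 {u, v} \<le> y1 $ v" and
    B1: "\<forall>k. k \<notin> {i, j} \<longrightarrow>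
        y1 $ i + y1 $ j + y1 $ k - w1 {i, j} - w1 {j, k} - w1 {i, k} \<le> r1 \<and>
        - y1 $ i + w1 {i, j} + w1 {i, k} - w1 {j, k} \<le> 0 \<and>
        - y1 $ j + w1 {i, j} - w1 {i, k} + w1 {j, k} \<le> 0 \<and>
        - y1 $ k - w1 {i, j} + w1 {i, k} + w1 {j, k} \<le> 0" and
    C1: "r1 \<ge> 0" "a0 * r1 + a \<bullet> y1 = 1" and
    D1: "a1 = (a0 + a $ i) * y1 $ i + (\<Sum>v\<in>UNIV - {i}. a $ v * w1 {i, v})"
        "b1 = (a0 + a $ j) * y1 $ j + (\<Sum>v\<in>UNIV - {j}. a $ v * w1 {j, v})"
    unfolding e1 S2_def by blast
  from p2 obtain w2 where
    A2: "\<forall>u v. {u, v} \<in> E {i, j} \<longrightarrow>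
        w2 {u, v} \<ge> 0 \<and> y2 $ u + y2 $ v - w2 {u, v} \<le> r2 \<and>
        w2 {u, v} \<le> y2 $ u \<and> w2 {u, v} \<le> y2 $ v" and
    B2: "\<forall>k. k \<notin> {i, j} \<longrightarrow>
        y2 $ i + y2 $ j + y2 $ k - w2 {i, j} - w2 {j, k} - w2 {i, k} \<le> r2 \<and>
        - y2 $ i + w2 {i, j} + w2 {i, k} - w2 {j, k} \<le> 0 \<and>
        - y2 $ j + w2 {i, j} - w2 {i, k} + w2 {j, k} \<le> 0 \<and>
        - y2 $ k - w2 {i, j} + w2 {i, k} + w2 {j, k} \<le> 0" and
    C2: "r2 \<ge> 0" "a0 * r2 + a \<bullet> y2 = 1" and
    D2: "a2 = (a0 + a $ i) * y2 $ i + (\<Sum>v\<in>UNIV - {i}. a $ v * w2 {i, v})"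
        "b2 = (a0 + a $ j) * y2 $ j + (\<Sum>v\<in>UNIV - {j}. a $ v * w2 {j, v})"
    unfolding e2 S2_def by blast
  define w where "w A = u * w1 A + v * w2 A" for A
  have sx: "(\<Sum>x\<in>UNIV - {l}. a $ x * w {l, x}) = u * (\<Sum>x\<in>UNIV - {l}. a $ x * w1 {l, x}) + v * (\<Sum>x\<in>UNIV - {l}. a $ x * w2 {l, x})" for l
    by (simp add: w_def distrib_left sum.distrib sum_distrib_left mult.left_commute)
  have inn: "a0 * (u * r1 + v * r2) + a \<bullet> (u *\<^sub>R y1 + v *\<^sub>R y2) = u * (a0 * r1 + a \<bullet> y1) + v * (a0 * r2 + a \<bullet> y2)"
    by (simp add: inner_add_right algebra_simps)
  show "u *\<^sub>R p1 + v *\<^sub>R p2 \<in> S2 a0 a i j"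
    unfolding e1 e2 S2_def
    apply simp
    apply (rule exI[of _ w])
    apply (intro conjI allI impI)
    subgoal for p q
      using A1[rule_format, of p q] A2[rule_format, of p q] u v by (simp add: w_def)
    subgoal for p q
      using A1[rule_format, of p q] A2[rule_format, of p q] u v
        cmb[of "y1 $ p + y1 $ q - w1 {p, q}" r1 "y2 $ p + y2 $ q - w2 {p, q}" r2 u v]
      by (simp add: w_def algebra_simps)
    subgoal for p q
      using A1[rule_format, of p q] A2[rule_format, of p q] u v
        cmb[of "w1 {p, q}" "y1 $ p" "w2 {p,q}" "y2 $ p" u v] by (simp add: w_def)
    subgoal for p q
      using A1[rule_format, of p q] A2[rule_format, of p q] u v
        cmb[of "w1 {p, q}" "y1 $ q" "w2 {p,q}" "y2 $ q" u v] by (simp add: w_def)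
    subgoal for k
      using B1[rule_format, of k] B2[rule_format, of k] u v
      cmb[of "y1 $ i + y1 $ j + y1 $ k - w1 {i, j} - w1 {j, k} - w1 {i, k}" r1
          "y2 $ i + y2 $ j + y2 $ k - w2 {i, j} - w2 {j, k} - w2 {i, k}" r2 u v]
      by (simp add: w_def algebra_simps)
    subgoal for k
      using B1[rule_format, of k] B2[rule_format, of k] u v
      cmb[of "w1 {i, j} + w1 {i, k} - w1 {j, k}" "y1 $ i" "w2 {i, j} + w2 {i, k} - w2 {j, k}" "y2 $ i" u v]
      by (simp add: w_def algebra_simps)
    subgoal for k
      using B1[rule_format, of k] B2[rule_format, of k] u v
      cmb[of "w1 {i, j} - w1 {i, k} + w1 {j, k}" "y1 $ j" "w2 {i, j} - w2 {i, k} + w2 {j, k}" "y2 $ j" u v]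
      by (simp add: w_def algebra_simps)
    subgoal for k
      using B1[rule_format, of k] B2[rule_format, of k] u v
      cmb[of "- w1 {i, j} + w1 {i, k} + w1 {j, k}" "y1 $ k" "- w2 {i, j} + w2 {i, k} + w2 {j, k}" "y2 $ k" u v]
      by (simp add: w_def algebra_simps)
    subgoal using C1 C2 u v by simp
    subgoal using inn C1 C2 uv by simp
    subgoal unfolding sx D1 D2 by (simp add: algebra_simps)
    subgoal unfolding sx D1 D2 by (simp add: algebra_simps)
    done
qed

lemma sum_minus_one: "(\<Sum>v\<in>UNIV - {l}. (f::'n::finite\<Rightarrow>real) v) = (\<Sum>v\<in>UNIV. f v) - f l"
  by (simp add: sum_diff1)

lemma edge_ne: "{p, q} \<in> E I \<Longrightarrow> p \<noteq> q"
  unfolding E_def by (auto simp: doubleton_eq_iff)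

lemma vert:
  fixes a :: "real^'n"
  assumes x: "x \<in> binary_points" and c: "a0 + a \<bullet> x > 0" and ij: "i \<noteq> j"
  shows "(1/(a0 + a \<bullet> x), (1/(a0 + a \<bullet> x)) *\<^sub>R x, x$i, x$j) \<in> S2 a0 a i j"
proof -
  define r where "r = 1/(a0 + a \<bullet> x)"
  have r: "r > 0" using c by (simp add: r_def)
  have r1: "r * (a0 + a \<bullet> x) = 1" using c by (simp add: r_def)
  have xb: "\<And>k. x$k = 0 \<or> x$k = 1" using x by (auto simp: binary_points_def)
  define w where "w A = r * prod (\<lambda>k. x$k) A" for A
  have wpq: "p \<noteq> q \<Longrightarrow> w {p, q} = r * (x$p * x$q)" for p q by (simp add: w_def)
  have xi: "x$l = (a0 + a $ l) * (r * x $ l) + (\<Sum>v\<in>UNIV - {l}. a $ v * w {l, v})" for l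
  proof -
    have "(\<Sum>v\<in>UNIV - {l}. a $ v * w {l, v}) = (\<Sum>v\<in>UNIV - {l}. r * x$l * (a $ v * x $ v))"
      by (rule sum.cong) (auto simp: wpq)
    also have "\<dots> = r * x$l * (a \<bullet> x - a$l * x$l)"
      by (simp add: sum_distrib_left[symmetric] sum_minus_one inner_cart)
    finally have s: "(\<Sum>v\<in>UNIV - {l}. a $ v * w {l, v}) = r * x$l * (a \<bullet> x - a$l * x$l)" .
    show ?thesis unfolding s using xb[of l] r1 by (auto simp: algebra_simps)
  qed
  show ?thesis
    unfolding S2_def r_def[symmetric]
    apply simp
    apply (rule exI[of _ w])
    apply (intro conjI allI impI)
    subgoal for p q using edge_ne[of p q] xb[of p] xb[of q] r by (auto simp: wpq)
    subgoal for p q using edge_ne[of p q] xb[of p] xb[of q] r by (auto simp: wpq)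
    subgoal for p q using edge_ne[of p q] xb[of p] xb[of q] r by (auto simp: wpq)
    subgoal for p q using edge_ne[of p q] xb[of p] xb[of q] r by (auto simp: wpq)
    subgoal for k using ij xb[of i] xb[of j] xb[of k] r by (auto simp: wpq)
    subgoal for k using ij xb[of i] xb[of j] xb[of k] r by (auto simp: wpq)
    subgoal for k using ij xb[of i] xb[of j] xb[of k] r by (auto simp: wpq)
    subgoal for k using ij xb[of i] xb[of j] xb[of k] r by (auto simp: wpq)
    subgoal using r by simp
    subgoal using r1 by (simp add: algebra_simps)
    subgoal using xi[of i] by simp
    subgoal using xi[of j] by simp
    done
qed

lemma easy_dir:
  fixes a :: "real^'n"
  assumes pos: "\<forall>x\<in>binary_points. a0 + a \<bullet> x > 0" and ij: "i \<noteq> j"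
  shows "convex hull (G2 a0 a i j) \<subseteq> S2 a0 a i j"
  by (rule hull_minimal) (use pos ij in \<open>auto simp: G2_def S2_convex intro!: vert\<close>)

definition fmap :: "real \<Rightarrow> real^'n \<Rightarrow> 'n \<Rightarrow> 'n \<Rightarrow> real^'n \<Rightarrow> real \<times> (real^'n) \<times> real \<times> real" where
  "fmap a0 a i j z = (1, z, z$i * (a0 + a \<bullet> z), z$j * (a0 + a \<bullet> z))"

lemma face:
  fixes a :: "real^'n"
  assumes z: "z \<in> cbox 0 1" and zi: "z$i \<in> {0,1}" and zj: "z$j \<in> {0,1}" and ij: "i \<noteq> j"
  shows "fmap a0 a i j z \<in> convex hull (fmap a0 a i j ` binary_points)"
proof -
  define B :: "real^'n" where "B = (\<chi> k. if k = i then z$i else if k = j then z$j else 0)"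
  define Tl :: "real^'n \<Rightarrow> real^'n" where "Tl x = (\<chi> k. if k = i \<or> k = j then 0 else x$k)" for x
  define M :: "real^'n \<Rightarrow> real \<times> (real^'n) \<times> real \<times> real"
    where "M x = (0, Tl x, z$i * (a \<bullet> Tl x), z$j * (a \<bullet> Tl x))" for x
  define b where "b = (1::real, B, z$i * (a0 + a \<bullet> B), z$j * (a0 + a \<bullet> B))"
  have Tadd: "Tl (x + y) = Tl x + Tl y" for x y by (simp add: Tl_def vec_eq_iff)
  have Tsc: "Tl (c *\<^sub>R x) = c *\<^sub>R Tl x" for c x by (simp add: Tl_def vec_eq_iff)
  have lin: "linear M"
    by (rule linearI) (simp_all add: M_def Tadd Tsc inner_add_right algebra_simps)
  have fT: "fmap a0 a i j (B + Tl x) = b + M x" for x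
    using ij by (simp add: fmap_def b_def M_def B_def Tl_def inner_add_right algebra_simps)
  have zeq: "z = B + Tl z" by (simp add: vec_eq_iff B_def Tl_def)
  have zV: "z \<in> convex hull binary_points" using z by (simp add: binary_hull)
  have "M z \<in> convex hull (M ` binary_points)"
    using zV convex_hull_linear_image[OF lin] by blast
  then have "b + M z \<in> (\<lambda>x. b + x) ` (convex hull (M ` binary_points))" by blast
  then have "b + M z \<in> convex hull ((\<lambda>x. b + x) ` M ` binary_points)"
    by (simp add: convex_hull_translation)
  moreover have "\<forall>v\<in>binary_points. b + M v \<in> fmap a0 a i j ` binary_points"
  proof
    fix v :: "real^'n" assume v: "v \<in> binary_points"
    have "B + Tl v \<in> binary_points" using v zi zj
      by (auto simp: binary_points_def B_def Tl_def)
    then show "b + M v \<in> fmap a0 a i j ` binary_points" using fT[of v, symmetric] by blast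
  qed
  then have "(\<lambda>x. b + x) ` M ` binary_points \<subseteq> fmap a0 a i j ` binary_points" by blast
  ultimately have "b + M z \<in> convex hull (fmap a0 a i j ` binary_points)"
    using hull_mono by blast
  moreover have "fmap a0 a i j z = b + M z" by (subst zeq) (rule fT)
  ultimately show ?thesis by simp
qed

lemma scaling:
  fixes a :: "real^'n"
  assumes pos: "\<forall>x\<in>binary_points. a0 + a \<bullet> x > 0"
    and Q: "Q \<in> convex hull (fmap a0 a i j ` binary_points)"
    and r: "r > 0" and rl: "r * (a0 * fst Q + a \<bullet> fst (snd Q)) = 1"
  shows "r *\<^sub>R Q \<in> convex hull (G2 a0 a i j)"
proof -
  define F where "F = fmap a0 a i j ` binary_points"
  have fin: "finite F" unfolding F_def by (intro finite_imageI finite_binary)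
  obtain u where u0: "\<forall>p\<in>F. 0 \<le> u p" and u1: "sum u F = 1" and uQ: "(\<Sum>p\<in>F. u p *\<^sub>R p) = Q"
  proof -
    have "Q \<in> convex hull F" using Q by (simp add: F_def)
    then show ?thesis using that unfolding convex_hull_finite[OF fin] by blast
  qed
  define l where "l p = a0 * fst p + a \<bullet> fst (snd p)" for p :: "real \<times> (real^'n) \<times> real \<times> real"
  have lQ: "l Q = (\<Sum>p\<in>F. u p * l p)"
    unfolding uQ[symmetric] l_def
    by (simp add: fst_sum snd_sum inner_sum_right sum_distrib_left sum.distrib algebra_simps)
  have lpos: "l p > 0" if "p \<in> F" for p
    using that pos by (auto simp: F_def fmap_def l_def)
  have inG: "(1 / l p) *\<^sub>R p \<in> G2 a0 a i j" if pF: "p \<in> F" for p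
  proof -
    obtain v where v: "v \<in> binary_points" and p: "p = fmap a0 a i j v" using pF unfolding F_def by blast
    have c: "a0 + a \<bullet> v > 0" using pos v by blast
    have "(1 / l p) *\<^sub>R p = (1/(a0 + a \<bullet> v), (1/(a0 + a \<bullet> v)) *\<^sub>R v, v$i, v$j)"
      using c by (simp add: p fmap_def l_def)
    then show ?thesis using v unfolding G2_def by blast
  qed
  have "r *\<^sub>R Q = (\<Sum>p\<in>F. (r * u p * l p) *\<^sub>R ((1 / l p) *\<^sub>R p))"
    unfolding uQ[symmetric] scaleR_sum_right
    by (rule sum.cong) (use lpos in \<open>auto simp: less_imp_neq[symmetric]\<close>)
  also have "\<dots> \<in> convex hull (G2 a0 a i j)"
  proof (rule convex_sum[OF fin convex_convex_hull, where a="\<lambda>p. r * u p * l p" and y="\<lambda>p. (1 / l p) *\<^sub>R p"])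
    show "(\<Sum>p\<in>F. r * u p * l p) = 1"
    proof -
      have "(\<Sum>p\<in>F. r * u p * l p) = r * (\<Sum>p\<in>F. u p * l p)"
        by (simp add: sum_distrib_left mult.assoc)
      also have "\<dots> = r * l Q" using lQ by simp
      also have "\<dots> = 1" using rl by (simp add: l_def)
      finally show ?thesis .
    qed
    show "0 \<le> r * u p * l p" if "p \<in> F" for p
      using r u0 lpos[OF that] that by (simp add: less_imp_le)
    show "(1 / l p) *\<^sub>R p \<in> convex hull G2 a0 a i j" if "p \<in> F" for p
      by (rule hull_inc[OF inG[OF that]])
  qed
  finally show ?thesis .
qed

lemma hard:
  fixes a :: "real^'n"
  assumes pos: "\<forall>x\<in>binary_points. a0 + a \<bullet> x > 0" and ij: "i \<noteq> j"
    and mem: "(\<rho>, y, xi, xj) \<in> S2 a0 a i j"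
  shows "(\<rho>, y, xi, xj) \<in> convex hull (G2 a0 a i j)"
proof -
  from mem obtain w where
    A: "\<forall>u v. {u, v} \<in> E {i, j} \<longrightarrow>
        w {u, v} \<ge> 0 \<and> y $ u + y $ v - w {u, v} \<le> \<rho> \<and>
        w {u, v} \<le> y $ u \<and> w {u, v} \<le> y $ v" and
    B: "\<forall>k. k \<notin> {i, j} \<longrightarrow>
        y $ i + y $ j + y $ k - w {i, j} - w {j, k} - w {i, k} \<le> \<rho> \<and>
        - y $ i + w {i, j} + w {i, k} - w {j, k} \<le> 0 \<and>
        - y $ j + w {i, j} - w {i, k} + w {j, k} \<le> 0 \<and>
        - y $ k - w {i, j} + w {i, k} + w {j, k} \<le> 0" and
    C: "\<rho> \<ge> 0" "a0 * \<rho> + a \<bullet> y = 1" and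
    D: "xi = (a0 + a $ i) * y $ i + (\<Sum>v\<in>UNIV - {i}. a $ v * w {i, v})"
        "xj = (a0 + a $ j) * y $ j + (\<Sum>v\<in>UNIV - {j}. a $ v * w {j, v})"
    unfolding S2_def by blast
  have Eij: "{i,j} \<in> E {i,j}" unfolding E_def using ij by blast
  have Eik: "k \<noteq> i \<Longrightarrow> {i,k} \<in> E {i,j}" for k unfolding E_def by blast
  have Ejk: "k \<noteq> j \<Longrightarrow> {j,k} \<in> E {i,j}" for k unfolding E_def by blast
  note Aij = A[rule_format, OF Eij]
  note Aik = A[rule_format, OF Eik]
  note Ajk = A[rule_format, OF Ejk]
  have rpos: "\<rho> > 0"
  proof (rule ccontr)
    assume "\<not> \<rho> > 0" then have r0: "\<rho> = 0" using C by simp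
    have "y$u = 0" for u
    proof (cases "u = i")
      case True then show ?thesis using Aij r0 by auto
    next
      case False then show ?thesis using Aik[of u] r0 by auto
    qed
    then have "a \<bullet> y = 0" by (simp add: inner_cart)
    then show False using C r0 by simp
  qed
  define \<tau> where "\<tau> k = max 0 (max (w{i,k} - y$i + w{i,j}) (max (w{j,k} - y$j + w{i,j}) (w{i,k} + w{j,k} - y$k)))" for k
  have \<tau>b: "0 \<le> \<tau> k \<and> w{i,k} - y$i + w{i,j} \<le> \<tau> k \<and> w{j,k} - y$j + w{i,j} \<le> \<tau> k \<and>
      w{i,k} + w{j,k} - y$k \<le> \<tau> k \<and> \<tau> k \<le> w{i,j} \<and> \<tau> k \<le> w{i,k} \<and> \<tau> k \<le> w{j,k} \<and>
      \<tau> k \<le> \<rho> - y$i - y$j - y$k + w{i,j} + w{i,k} + w{j,k}" if k: "k \<notin> {i,j}" for k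
  proof -
    have h: "w {i, j} \<ge> 0 \<and> y $ i + y $ j - w {i, j} \<le> \<rho> \<and> w {i, j} \<le> y $ i \<and> w {i, j} \<le> y $ j"
            "w {i, k} \<ge> 0 \<and> y $ i + y $ k - w {i, k} \<le> \<rho> \<and> w {i, k} \<le> y $ i \<and> w {i, k} \<le> y $ k"
            "w {j, k} \<ge> 0 \<and> y $ j + y $ k - w {j, k} \<le> \<rho> \<and> w {j, k} \<le> y $ j \<and> w {j, k} \<le> y $ k"
      using Aij Aik[of k] Ajk[of k] k by auto
    have b: "y $ i + y $ j + y $ k - w {i, j} - w {j, k} - w {i, k} \<le> \<rho> \<and>
        - y $ i + w {i, j} + w {i, k} - w {j, k} \<le> 0 \<and>
        - y $ j + w {i, j} - w {i, k} + w {j, k} \<le> 0 \<and>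
        - y $ k - w {i, j} + w {i, k} + w {j, k} \<le> 0" using B k by blast
    have hi: "\<tau> k \<le> m \<longleftrightarrow> 0 \<le> m \<and> w{i,k} - y$i + w{i,j} \<le> m \<and> w{j,k} - y$j + w{i,j} \<le> m \<and> w{i,k} + w{j,k} - y$k \<le> m" for m
      by (simp add: \<tau>_def)
    have lo: "0 \<le> \<tau> k \<and> w{i,k} - y$i + w{i,j} \<le> \<tau> k \<and> w{j,k} - y$j + w{i,j} \<le> \<tau> k \<and> w{i,k} + w{j,k} - y$k \<le> \<tau> k"
      by (simp add: \<tau>_def le_max_iff_disj)
    have u1: "\<tau> k \<le> w{i,j}" unfolding hi using h b by linarith
    have u2: "\<tau> k \<le> w{i,k}" unfolding hi using h b by linarith
    have u3: "\<tau> k \<le> w{j,k}" unfolding hi using h b by linarith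
    have u4: "\<tau> k \<le> \<rho> - y$i - y$j - y$k + w{i,j} + w{i,k} + w{j,k}" unfolding hi using h b by linarith
    show ?thesis using lo u1 u2 u3 u4 by blast
  qed
  define St :: "(real \<times> real) set" where "St = {(1,1),(1,0),(0,1),(0,0)}"
  define P where "P s = (if s = (1,1) then w{i,j} else if s = (1,0) then y$i - w{i,j}
      else if s = (0,1) then y$j - w{i,j} else \<rho> - y$i - y$j + w{i,j})" for s :: "real \<times> real"
  define t where "t k s = (if s = (1,1) then \<tau> k else if s = (1,0) then w{i,k} - \<tau> k
      else if s = (0,1) then w{j,k} - \<tau> k else y$k - w{i,k} - w{j,k} + \<tau> k)" for k and s :: "real \<times> real"
  define z where "z s = (\<chi> k. if k = i then fst s else if k = j then snd s else t k s / P s)" for s :: "real \<times> real"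
  have P0: "0 \<le> P s" if "s \<in> St" for s using that Aij by (auto simp: St_def P_def)
  have tb: "0 \<le> t k s \<and> t k s \<le> P s" if "s \<in> St" "k \<notin> {i,j}" for s k
  proof -
    have T: "0 \<le> \<tau> k \<and> w{i,k} - y$i + w{i,j} \<le> \<tau> k \<and> w{j,k} - y$j + w{i,j} \<le> \<tau> k \<and>
      w{i,k} + w{j,k} - y$k \<le> \<tau> k \<and> \<tau> k \<le> w{i,j} \<and> \<tau> k \<le> w{i,k} \<and> \<tau> k \<le> w{j,k} \<and>
      \<tau> k \<le> \<rho> - y$i - y$j - y$k + w{i,j} + w{i,k} + w{j,k}" using \<tau>b that(2) by blast
    from that(1) have "s = (1,1) \<or> s = (1,0) \<or> s = (0,1) \<or> s = (0,0)" by (simp add: St_def)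
    then show ?thesis using T Aij by (elim disjE) (simp_all add: t_def P_def)
  qed
  have key: "P s * (t k s / P s) = t k s" if "s \<in> St" "k \<notin> {i,j}" for s k
  proof (cases "P s = 0")
    case True then show ?thesis using tb[OF that] by simp
  qed simp
  have zI[simp]: "z s $ i = fst s" for s by (simp add: z_def)
  have zJ[simp]: "z s $ j = snd s" for s using ij by (simp add: z_def)
  have zK: "k \<notin> {i,j} \<Longrightarrow> z s $ k = t k s / P s" for s k by (simp add: z_def)
  have zbox: "z s \<in> cbox 0 1" if s: "s \<in> St" for s
    unfolding mem_box_cart(2)
  proof
    fix k show "(0::real^'n) $ k \<le> z s $ k \<and> z s $ k \<le> (1::real^'n) $ k"
    proof (cases "k \<in> {i,j}")
      case True then show ?thesis using s by (auto simp: St_def)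
    next
      case False
      have "0 \<le> t k s / P s" using tb[OF s False] P0[OF s] by simp
      moreover have "t k s / P s \<le> 1"
        using tb[OF s False] P0[OF s] by (cases "P s = 0") (auto simp: divide_le_eq_1)
      ultimately show ?thesis using False by (simp add: zK)
    qed
  qed
  have faceS: "fmap a0 a i j (z s) \<in> convex hull (fmap a0 a i j ` binary_points)" if s: "s \<in> St" for s
    by (rule face[OF zbox[OF s] _ _ ij]) (use s in \<open>auto simp: St_def\<close>)
  have St_sum: "(\<Sum>s\<in>St. g s) = g (1,1) + g (1,0) + g (0,1) + g (0,0)" for g :: "real \<times> real \<Rightarrow> real"
    by (simp add: St_def)
  have St_sumv: "(\<Sum>s\<in>St. g s) = g (1,1) + g (1,0) + g (0,1) + g (0,0)" for g :: "real \<times> real \<Rightarrow> real \<times> (real^'n) \<times> real \<times> real"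
    by (simp add: St_def algebra_simps)
  have rem: "UNIV - {i} - {j} = UNIV - {i,j}" "UNIV - {j} - {i} = UNIV - {i,j}" by auto
  have csplit: "a \<bullet> x = a$i * x$i + a$j * x$j + (\<Sum>k\<in>UNIV-{i,j}. a$k * x$k)" for x
  proof -
    have "a \<bullet> x = a$i * x$i + (\<Sum>k\<in>UNIV-{i}. a$k * x$k)"
      unfolding inner_cart by (rule sum.remove) auto
    also have "(\<Sum>k\<in>UNIV-{i}. a$k * x$k) = a$j * x$j + (\<Sum>k\<in>UNIV-{i}-{j}. a$k * x$k)"
      by (rule sum.remove) (use ij in auto)
    finally show ?thesis by (simp add: rem)
  qed
  have wsi: "(\<Sum>v\<in>UNIV - {i}. a $ v * w {i, v}) = a$j * w{i,j} + (\<Sum>k\<in>UNIV-{i,j}. a$k * w{i,k})"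
    using sum.remove[of "UNIV - {i}" j "\<lambda>v. a $ v * w {i, v}"] ij by (simp add: rem)
  have wsj: "(\<Sum>v\<in>UNIV - {j}. a $ v * w {j, v}) = a$i * w{i,j} + (\<Sum>k\<in>UNIV-{i,j}. a$k * w{j,k})"
    using sum.remove[of "UNIV - {j}" i "\<lambda>v. a $ v * w {j, v}"] ij by (simp add: rem insert_commute)
  have pc: "P s * (a0 + a \<bullet> z s) = P s * a0 + a$i * fst s * P s + a$j * snd s * P s + (\<Sum>k\<in>UNIV-{i,j}. a$k * t k s)"
    if s: "s \<in> St" for s
  proof -
    have "P s * (\<Sum>k\<in>UNIV-{i,j}. a$k * z s $ k) = (\<Sum>k\<in>UNIV-{i,j}. a$k * t k s)"
      unfolding sum_distrib_left
    proof (rule sum.cong)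
      fix k assume "k \<in> UNIV - {i,j}"
      then have k: "k \<notin> {i,j}" by simp
      show "P s * (a $ k * z s $ k) = a $ k * t k s"
        by (simp only: zK[OF k] mult.left_commute[of "P s"] key[OF s k])
    qed simp
    then show ?thesis unfolding csplit[of "z s"] by (simp add: algebra_simps)
  qed
  have e1: "P (1,1) + P (1,0) + P (0,1) + P (0,0) = \<rho>" by (simp add: P_def)
  have e2: "P (1,1) *\<^sub>R z (1,1) + P (1,0) *\<^sub>R z (1,0) + P (0,1) *\<^sub>R z (0,1) + P (0,0) *\<^sub>R z (0,0) = y"
  proof (rule iffD2[OF vec_eq_iff], rule allI)
    fix k
    show "(P (1,1) *\<^sub>R z (1,1) + P (1,0) *\<^sub>R z (1,0) + P (0,1) *\<^sub>R z (0,1) + P (0,0) *\<^sub>R z (0,0)) $ k = y $ k"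
    proof (cases "k \<in> {i,j}")
      case True then show ?thesis using ij by (auto simp: P_def)
    next
      case False
      have St1: "(1::real,1::real) \<in> St" "(1::real,0::real) \<in> St" "(0::real,1::real) \<in> St" "(0::real,0::real) \<in> St"
        by (auto simp: St_def)
      show ?thesis using key[OF St1(1) False] key[OF St1(2) False] key[OF St1(3) False] key[OF St1(4) False] False
        by (simp add: zK t_def)
    qed
  qed
  have St1: "(1::real,1::real) \<in> St" "(1::real,0::real) \<in> St" "(0::real,1::real) \<in> St" "(0::real,0::real) \<in> St"
    by (auto simp: St_def)
  have e3: "P (1,1) * (a0 + a \<bullet> z (1,1)) + P (1,0) * (a0 + a \<bullet> z (1,0)) = xi"
  proof -
    have "(\<Sum>k\<in>UNIV-{i,j}. a$k * t k (1,1)) + (\<Sum>k\<in>UNIV-{i,j}. a$k * t k (1,0)) = (\<Sum>k\<in>UNIV-{i,j}. a$k * w{i,k})"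
      unfolding sum.distrib[symmetric] by (rule sum.cong) (simp_all add: t_def algebra_simps)
    then show ?thesis unfolding pc[OF St1(1)] pc[OF St1(2)] D wsi
      by (simp add: P_def algebra_simps)
  qed
  have e4: "P (1,1) * (a0 + a \<bullet> z (1,1)) + P (0,1) * (a0 + a \<bullet> z (0,1)) = xj"
  proof -
    have "(\<Sum>k\<in>UNIV-{i,j}. a$k * t k (1,1)) + (\<Sum>k\<in>UNIV-{i,j}. a$k * t k (0,1)) = (\<Sum>k\<in>UNIV-{i,j}. a$k * w{j,k})"
      unfolding sum.distrib[symmetric] by (rule sum.cong) (simp_all add: t_def algebra_simps)
    then show ?thesis unfolding pc[OF St1(1)] pc[OF St1(3)] D wsj
      by (simp add: P_def algebra_simps)
  qed
  have Rsum: "(\<Sum>s\<in>St. P s *\<^sub>R fmap a0 a i j (z s)) = (\<rho>, y, xi, xj)"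
  proof -
    have fm: "P s *\<^sub>R fmap a0 a i j (z s) = (P s, P s *\<^sub>R z s, fst s * (P s * (a0 + a \<bullet> z s)), snd s * (P s * (a0 + a \<bullet> z s)))" for s
      by (simp add: fmap_def)
    show ?thesis unfolding St_sumv fm
      by (simp only: add_Pair fst_conv snd_conv mult_1 mult_zero_left add_0_right add_0_left scale_zero_left e1 e2 e3 e4)
  qed
  define Q where "Q = (1/\<rho>) *\<^sub>R (\<rho>, y, xi, xj)"
  have "Q = (\<Sum>s\<in>St. (P s / \<rho>) *\<^sub>R fmap a0 a i j (z s))"
    unfolding Q_def Rsum[symmetric] scaleR_sum_right by (simp add: divide_inverse_commute)
  also have "\<dots> \<in> convex hull (fmap a0 a i j ` binary_points)"
  proof (rule convex_sum[OF _ convex_convex_hull, where a="\<lambda>s. P s / \<rho>" and y="\<lambda>s. fmap a0 a i j (z s)"])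
    show "finite St" by (simp add: St_def)
    show "(\<Sum>s\<in>St. P s / \<rho>) = 1" unfolding St_sum using e1 rpos by (simp add: add_divide_distrib[symmetric])
    show "0 \<le> P s / \<rho>" if "s \<in> St" for s using P0[OF that] rpos by simp
    show "fmap a0 a i j (z s) \<in> convex hull (fmap a0 a i j ` binary_points)" if "s \<in> St" for s
      by (rule faceS[OF that])
  qed
  finally have Qin: "Q \<in> convex hull (fmap a0 a i j ` binary_points)" .
  have "\<rho> *\<^sub>R Q \<in> convex hull (G2 a0 a i j)"
  proof (rule scaling[OF pos Qin rpos])
    show "\<rho> * (a0 * fst Q + a \<bullet> fst (snd Q)) = 1"
      using C rpos by (simp add: Q_def algebra_simps)
  qed
  then show ?thesis using rpos by (simp add: Q_def)
qed

theorem corollary1: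
  fixes a0 :: real and a :: "real^'n" and i j :: 'n
  assumes "CARD('n) \<ge> 3"
    and "\<forall>x\<in>binary_points. a0 + a \<bullet> x > 0"
    and "i \<noteq> j"
  shows "convex hull (G2 a0 a i j) = S2 a0 a i j
     \<and> two_term_relaxation a0 a = \<Inter> {extend2 i' j' (S2 a0 a i' j') | i' j'. i' \<noteq> j'}"
proof -
  have eq: "convex hull (G2 a0 a i' j') = S2 a0 a i' j'" if ne: "i' \<noteq> j'" for i' j'
  proof (rule antisym[OF easy_dir[OF assms(2) ne]])
    show "S2 a0 a i' j' \<subseteq> convex hull (G2 a0 a i' j')"
    proof
      fix p assume p: "p \<in> S2 a0 a i' j'"
      obtain r y u v where pe: "p = (r, y, u, v)" by (cases p) auto
      show "p \<in> convex hull (G2 a0 a i' j')"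
        using hard[OF assms(2) ne, of r y u v] p pe by simp
    qed
  qed
  have sets: "{extend2 i' j' (convex hull (G2 a0 a i' j')) | i' j'. i' \<noteq> j'} = {extend2 i' j' (S2 a0 a i' j') | i' j'. i' \<noteq> j'}"
  proof (rule Collect_cong)
    fix X
    show "(\<exists>i' j'. X = extend2 i' j' (convex hull (G2 a0 a i' j')) \<and> i' \<noteq> j') =
          (\<exists>i' j'. X = extend2 i' j' (S2 a0 a i' j') \<and> i' \<noteq> j')"
      using eq by metis
  qed
  show ?thesis using eq[OF assms(3)] sets unfolding two_term_relaxation_def by simp
qed

end
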